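(* For $p,q\ge 0$ let $K_{p,q}$ be the complete bipartite graph with parts of sizes $p$ and $q$. Then $$\sum_{p\ge0}\sum_{q\ge0}\mathrm{sa}(K_{p,q};t)\,\frac{x^p}{p!}\frac{y^q}{q!} = e^{t(x+y)}\,\frac{\cosh x+\cosh y-1}{\cosh(x+y)}.$$
   Context: All graphs are finite, simple and undirected. For a graph $G=(V,E)$ and $V'\subseteq V$, $G|_{V'}$ denotes the induced subgraph on $V'$. The signed a-number $\mathrm{sa}(G)$ is defined recursively: $\mathrm{sa}(G)=1$ if $G$ is the empty graph (no vertices); $\mathrm{sa}(G)=0$ if $G$ has a connected component with an odd number of vertices; otherwise $\mathrm{sa}(G)=-\sum_{V'\subsetneq V}\mathrm{sa}(G|_{V'})$. The signed a-polynomial of $G$ is $\mathrm{sa}(G;t)=\sum_{V'\subseteq V}\mathrm{sa}(G|_{V'})\,t^{|V\setminus V'|}$. *)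

theory Defs
  imports "HOL-Analysis.Analysis" "HOL-Computational_Algebra.Polynomial"
begin

text \<open>A finite simple graph is given by a vertex set V and a symmetric irreflexive
adjacency relation E.  The induced subgraph on W \<subseteq> V is (W, E) (E restricted to W).\<close>

definition simple_graph :: "'a set \<Rightarrow> ('a \<Rightarrow> 'a \<Rightarrow> bool) \<Rightarrow> bool" where
  "simple_graph V E \<longleftrightarrow> finite V \<and> (\<forall>u v. E u v \<longrightarrow> E v u) \<and> (\<forall>v. \<not> E v v)"

definition adj_in :: "('a \<Rightarrow> 'a \<Rightarrow> bool) \<Rightarrow> 'a set \<Rightarrow> 'a \<Rightarrow> 'a \<Rightarrow> bool" where
  "adj_in E V u v \<longleftrightarrow> u \<in> V \<and> v \<in> V \<and> E u v"

definition component :: "('a \<Rightarrow> 'a \<Rightarrow> bool) \<Rightarrow> 'a set \<Rightarrow> 'a \<Rightarrow> 'a set" where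
  "component E V v = {u \<in> V. (adj_in E V)\<^sup>*\<^sup>* v u}"

definition has_odd_component :: "('a \<Rightarrow> 'a \<Rightarrow> bool) \<Rightarrow> 'a set \<Rightarrow> bool" where
  "has_odd_component E V \<longleftrightarrow> (\<exists>v\<in>V. odd (card (component E V v)))"

function sa :: "('a \<Rightarrow> 'a \<Rightarrow> bool) \<Rightarrow> 'a set \<Rightarrow> int" where
  "sa E V = (if \<not> finite V \<or> V = {} then 1
             else if has_odd_component E V then 0
             else - (\<Sum>W \<in> {W. W \<subset> V}. sa E W))"
  by auto
termination
  by (relation "{((E, W), (E', V)). W \<subset> V \<and> finite V}")
     (auto intro: wf_subset[OF wf_finite_psubset[THEN wf_inv_image[of _ snd]]]
           simp: finite_psubset_def inv_image_def)

definition sa_poly :: "('a \<Rightarrow> 'a \<Rightarrow> bool) \<Rightarrow> 'a set \<Rightarrow> int poly" where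
  "sa_poly E V = (\<Sum>W \<in> Pow V. monom (sa E W) (card (V - W)))"

definition Kbip_V :: "nat \<Rightarrow> nat \<Rightarrow> (nat + nat) set" where
  "Kbip_V p q = Inl ` {..<p} \<union> Inr ` {..<q}"

definition Kbip_E :: "(nat + nat) \<Rightarrow> (nat + nat) \<Rightarrow> bool" where
  "Kbip_E u v \<longleftrightarrow> (isl u \<and> \<not> isl v) \<or> (\<not> isl u \<and> isl v)"

end

theory Submission
  imports Defs
begin

lemma tm_helper: "(a'::nat) \<le> a \<Longrightarrow> b' \<le> b \<Longrightarrow> a' \<noteq> a \<or> b' \<noteq> b \<Longrightarrow> a'+b' < a+b"
  by linarith

function s :: "nat \<Rightarrow> nat \<Rightarrow> int" where
  "s a b = (if a = 0 \<and> b = 0 then 1 else if a = 0 \<or> b = 0 \<or> odd (a+b) then 0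
     else - (\<Sum>p \<in> ({..a}\<times>{..b}) - {(a,b)}. int (a choose fst p) * int (b choose snd p) * s (fst p) (snd p)))"
  by auto
termination
  apply (relation "Wellfounded.measure (\<lambda>(a,b). a+b)")
   apply simp
  apply clarsimp
  done

declare s.simps[simp del] sa.simps[simp del]

lemma sum_Pow_card:
  fixes f :: "nat \<Rightarrow> 'b::comm_semiring_1"
  assumes "finite A"
  shows "(\<Sum>X\<in>Pow A. f (card X)) = (\<Sum>k\<le>card A. of_nat (card A choose k) * f k)"
proof -
  have "(\<Sum>X\<in>Pow A. f (card X)) = (\<Sum>k\<in>{..card A}. \<Sum>X\<in>{X. X \<in> Pow A \<and> card X = k}. f (card X))"
    by (rule sum.group[symmetric]) (use assms in \<open>auto simp: card_mono\<close>)
  also have "\<dots> = (\<Sum>k\<le>card A. of_nat (card A choose k) * f k)"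
  proof (rule sum.cong[OF refl])
    fix k assume "k \<in> {..card A}"
    have "(\<Sum>X\<in>{X. X \<in> Pow A \<and> card X = k}. f (card X)) = (\<Sum>X\<in>{X. X \<in> Pow A \<and> card X = k}. f k)"
      by (rule sum.cong) auto
    also have "\<dots> = of_nat (card {X. X \<subseteq> A \<and> card X = k}) * f k" by simp
    also have "\<dots> = of_nat (card A choose k) * f k" using n_subsets[OF assms] by simp
    finally show "(\<Sum>X\<in>{X. X \<in> Pow A \<and> card X = k}. f (card X)) = of_nat (card A choose k) * f k" .
  qed
  finally show ?thesis .
qed

lemma sum_Pow2_card:
  fixes f :: "nat \<Rightarrow> nat \<Rightarrow> 'b::comm_semiring_1"
  assumes "finite A" "finite B"
  shows "(\<Sum>p\<in>Pow A \<times> Pow B. f (card (fst p)) (card (snd p)))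
       = (\<Sum>p\<in>{..card A} \<times> {..card B}. of_nat (card A choose fst p) * of_nat (card B choose snd p) * f (fst p) (snd p))"
proof -
  have "(\<Sum>p\<in>Pow A \<times> Pow B. f (card (fst p)) (card (snd p))) = (\<Sum>X\<in>Pow A. \<Sum>Y\<in>Pow B. f (card X) (card Y))"
    unfolding sum.cartesian_product' by simp
  also have "\<dots> = (\<Sum>X\<in>Pow A. \<Sum>j\<le>card B. of_nat (card B choose j) * f (card X) j)"
    by (rule sum.cong[OF refl], rule sum_Pow_card[OF assms(2), of "\<lambda>j. f (card _) j"])
  also have "\<dots> = (\<Sum>j\<le>card B. \<Sum>X\<in>Pow A. of_nat (card B choose j) * f (card X) j)"
    by (rule sum.swap)
  also have "\<dots> = (\<Sum>j\<le>card B. \<Sum>i\<le>card A. of_nat (card A choose i) * (of_nat (card B choose j) * f i j))"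
    by (rule sum.cong[OF refl], rule sum_Pow_card[OF assms(1), of "\<lambda>i. of_nat (card B choose _) * f i _"])
  also have "\<dots> = (\<Sum>i\<le>card A. \<Sum>j\<le>card B. of_nat (card A choose i) * of_nat (card B choose j) * f i j)"
    by (subst sum.swap) (simp only: mult.assoc)
  also have "\<dots> = (\<Sum>p\<in>{..card A} \<times> {..card B}. of_nat (card A choose fst p) * of_nat (card B choose snd p) * f (fst p) (snd p))"
    unfolding sum.cartesian_product' by simp
  finally show ?thesis .
qed

definition sw :: "nat set \<Rightarrow> nat set \<Rightarrow> (nat + nat) set" where
  "sw A B = Inl ` A \<union> Inr ` B"

lemma sw_decomp: "W = sw {i. Inl i \<in> W} {j. Inr j \<in> W}"
  unfolding sw_def
proof (auto, goal_cases)
  case (1 x) then show ?case by (cases x) auto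
qed

lemma sw_inj: "sw A B = sw A' B' \<Longrightarrow> A = A' \<and> B = B'"
  unfolding sw_def by blast

lemma sw_subset_iff: "sw A' B' \<subseteq> sw A B \<longleftrightarrow> A' \<subseteq> A \<and> B' \<subseteq> B"
  unfolding sw_def by blast

lemma Pow_sw: "Pow (sw A B) = (\<lambda>p. sw (fst p) (snd p)) ` (Pow A \<times> Pow B)"
proof (intro equalityI subsetI)
  fix W assume 1: "W \<in> Pow (sw A B)"
  have "W = sw {i. Inl i \<in> W} {j. Inr j \<in> W}" by (rule sw_decomp)
  moreover have "{i. Inl i \<in> W} \<subseteq> A" "{j. Inr j \<in> W} \<subseteq> B" using 1 unfolding sw_def by auto
  ultimately show "W \<in> (\<lambda>p. sw (fst p) (snd p)) ` (Pow A \<times> Pow B)"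
    by (intro image_eqI[where x="({i. Inl i \<in> W}, {j. Inr j \<in> W})"]) auto
next
  fix W assume "W \<in> (\<lambda>p. sw (fst p) (snd p)) ` (Pow A \<times> Pow B)"
  then show "W \<in> Pow (sw A B)" by (auto simp: sw_def)
qed

lemma sw_Inl[simp]: "{i. Inl i \<in> sw X Y} = X" by (auto simp: sw_def)
lemma sw_Inr[simp]: "{i. Inr i \<in> sw X Y} = Y" by (auto simp: sw_def)

lemma inj_sw: "inj_on (\<lambda>p. sw (fst p) (snd p)) X"
  by (auto intro!: inj_onI dest: sw_inj simp: prod_eq_iff)

lemma card_sw: "finite A \<Longrightarrow> finite B \<Longrightarrow> card (sw A B) = card A + card B"
  unfolding sw_def by (subst card_Un_disjoint) (auto simp: card_image)

lemma finite_sw: "finite A \<Longrightarrow> finite B \<Longrightarrow> finite (sw A B)"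
  unfolding sw_def by auto

lemma sum_sub_sw:
  fixes f :: "nat \<Rightarrow> nat \<Rightarrow> 'b::comm_ring_1"
  assumes "finite A" "finite B"
  shows "(\<Sum>W\<in>Pow (sw A B). f (card {i. Inl i \<in> W}) (card {j. Inr j \<in> W}))
     = (\<Sum>p\<in>{..card A} \<times> {..card B}. of_nat (card A choose fst p) * of_nat (card B choose snd p) * f (fst p) (snd p))"
proof -
  have "(\<Sum>W\<in>Pow (sw A B). f (card {i. Inl i \<in> W}) (card {j. Inr j \<in> W}))
      = (\<Sum>p\<in>Pow A \<times> Pow B. f (card (fst p)) (card (snd p)))"
    unfolding Pow_sw by (subst sum.reindex[OF inj_sw]) simp
  also have "\<dots> = (\<Sum>p\<in>{..card A} \<times> {..card B}. of_nat (card A choose fst p) * of_nat (card B choose snd p) * f (fst p) (snd p))"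
    by (rule sum_Pow2_card[OF assms])
  finally show ?thesis .
qed

lemma Kbip_E_simps[simp]:
  "Kbip_E (Inl i) (Inr j)" "Kbip_E (Inr j) (Inl i)" "\<not> Kbip_E (Inl i) (Inl i')" "\<not> Kbip_E (Inr j) (Inr j')"
  by (auto simp: Kbip_E_def)

lemma comp_both:
  assumes "A \<noteq> {}" "B \<noteq> {}" "v \<in> sw A B"
  shows "component Kbip_E (sw A B) v = sw A B"
proof -
  obtain a0 b0 where a0: "a0 \<in> A" and b0: "b0 \<in> B" using assms by blast
  let ?R = "adj_in Kbip_E (sw A B)"
  have adj1: "?R (Inl i) (Inr j)" "?R (Inr j) (Inl i)" if "i \<in> A" "j \<in> B" for i j
    using that by (auto simp: adj_in_def sw_def)
  have from_b0: "?R\<^sup>*\<^sup>* (Inr b0) u" if "u \<in> sw A B" for u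
  proof -
    from that consider i where "i \<in> A" "u = Inl i" | j where "j \<in> B" "u = Inr j" by (auto simp: sw_def)
    then show ?thesis
    proof cases
      case 1 then show ?thesis using adj1 b0 by auto
    next
      case 2
      have "?R (Inr b0) (Inl a0)" "?R (Inl a0) (Inr j)" using adj1 a0 b0 2 by auto
      then show ?thesis using 2 by (meson converse_rtranclp_into_rtranclp r_into_rtranclp)
    qed
  qed
  have to_b0: "?R\<^sup>*\<^sup>* v (Inr b0)"
  proof -
    from assms(3) consider i where "i \<in> A" "v = Inl i" | j where "j \<in> B" "v = Inr j" by (auto simp: sw_def)
    then show ?thesis
    proof cases
      case 1 then show ?thesis using adj1 b0 by auto
    next
      case 2
      have "?R (Inr j) (Inl a0)" "?R (Inl a0) (Inr b0)" using adj1 a0 b0 2 by auto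
      then show ?thesis using 2 by (meson converse_rtranclp_into_rtranclp r_into_rtranclp)
    qed
  qed
  show ?thesis unfolding component_def using to_b0 from_b0 by (auto intro: rtranclp_trans)
qed

lemma rtranclp_noedge: "(adj_in Kbip_E W)\<^sup>*\<^sup>* v u \<Longrightarrow> (\<And>x y. \<not> adj_in Kbip_E W x y) \<Longrightarrow> v = u"
  by (induction rule: rtranclp.induct) auto

lemma comp_left:
  assumes "v \<in> sw A {}"
  shows "component Kbip_E (sw A {}) v = {v}"
proof -
  have "\<not> adj_in Kbip_E (sw A {}) x y" for x y by (auto simp: adj_in_def sw_def)
  then have "\<And>u. (adj_in Kbip_E (sw A {}))\<^sup>*\<^sup>* v u \<Longrightarrow> v = u" using rtranclp_noedge by blast
  then show ?thesis using assms unfolding component_def by auto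
qed

lemma comp_right:
  assumes "v \<in> sw {} B"
  shows "component Kbip_E (sw {} B) v = {v}"
proof -
  have "\<not> adj_in Kbip_E (sw {} B) x y" for x y by (auto simp: adj_in_def sw_def)
  then have "\<And>u. (adj_in Kbip_E (sw {} B))\<^sup>*\<^sup>* v u \<Longrightarrow> v = u" using rtranclp_noedge by blast
  then show ?thesis using assms unfolding component_def by auto
qed

lemma sa_sw: "finite A \<Longrightarrow> finite B \<Longrightarrow> sa Kbip_E (sw A B) = s (card A) (card B)"
proof (induction "card A + card B" arbitrary: A B rule: less_induct)
  case less
  note fin = less.prems
  show ?case
  proof (cases "A = {} \<or> B = {}")
    case True
    show ?thesis
    proof (cases "A = {} \<and> B = {}")
      case True
      then show ?thesis by (subst sa.simps, subst s.simps) (simp add: sw_def)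
    next
      case False
      with \<open>A = {} \<or> B = {}\<close> have odd: "has_odd_component Kbip_E (sw A B)"
      proof (elim disjE)
        assume "A = {}" with False obtain j where "j \<in> B" by auto
        then have "Inr j \<in> sw A B" by (simp add: sw_def)
        moreover have "component Kbip_E (sw A B) (Inr j) = {Inr j}" using comp_right[of "Inr j" B] \<open>A = {}\<close> \<open>Inr j \<in> sw A B\<close> by simp
        ultimately show ?thesis unfolding has_odd_component_def by (intro bexI[of _ "Inr j"]) auto
      next
        assume "B = {}" with False obtain i where "i \<in> A" by auto
        then have "Inl i \<in> sw A B" by (simp add: sw_def)
        moreover have "component Kbip_E (sw A B) (Inl i) = {Inl i}" using comp_left[of "Inl i" A] \<open>B = {}\<close> \<open>Inl i \<in> sw A B\<close> by simp
        ultimately show ?thesis unfolding has_odd_component_def by (intro bexI[of _ "Inl i"]) auto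
      qed
      have "sw A B \<noteq> {}" using False by (auto simp: sw_def)
      then have "sa Kbip_E (sw A B) = 0" using odd finite_sw[OF fin] by (subst sa.simps) simp
      moreover have "s (card A) (card B) = 0" using False True fin by (subst s.simps) auto
      ultimately show ?thesis by simp
    qed
  next
    case False
    then have ne: "A \<noteq> {}" "B \<noteq> {}" by auto
    then have cA: "card A \<noteq> 0" "card B \<noteq> 0" using fin by auto
    have odd_iff: "has_odd_component Kbip_E (sw A B) \<longleftrightarrow> odd (card A + card B)"
    proof -
      obtain i where "i \<in> A" using ne by auto
      then have "Inl i \<in> sw A B" by (simp add: sw_def)
      then show ?thesis using comp_both[OF ne] card_sw[OF fin] unfolding has_odd_component_def by auto
    qed
    have fV: "finite (sw A B)" using fin by (rule finite_sw)
    have neV: "sw A B \<noteq> {}" using ne by (auto simp: sw_def)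
    show ?thesis
    proof (cases "odd (card A + card B)")
      case True
      then show ?thesis using odd_iff fV neV cA by (subst sa.simps, subst s.simps) simp
    next
      case ev: False
      let ?f = "\<lambda>i j. s i j"
      have IH: "sa Kbip_E W = s (card {i. Inl i \<in> W}) (card {j. Inr j \<in> W})" if "W \<subset> sw A B" for W
      proof -
        define A' B' where "A' = {i. Inl i \<in> W}" and "B' = {j. Inr j \<in> W}"
        have W: "W = sw A' B'" unfolding A'_def B'_def by (rule sw_decomp)
        have sub: "A' \<subseteq> A" "B' \<subseteq> B" using that W sw_subset_iff by auto
        have fin': "finite A'" "finite B'" using sub fin finite_subset by auto
        have "card W < card (sw A B)" using that fV psubset_card_mono by blast
        then have "card A' + card B' < card A + card B" using W card_sw fin fin' by simp
        then have "sa Kbip_E (sw A' B') = s (card A') (card B')" by (rule less.hyps[OF _ fin'])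
        then show ?thesis unfolding A'_def[symmetric] B'_def[symmetric] using W by simp
      qed
      have "(\<Sum>W\<in>{W. W \<subset> sw A B}. sa Kbip_E W) = (\<Sum>W\<in>Pow (sw A B) - {sw A B}. s (card {i. Inl i \<in> W}) (card {j. Inr j \<in> W}))"
      proof (rule sum.cong)
        show "{W. W \<subset> sw A B} = Pow (sw A B) - {sw A B}" by auto
      next
        fix W assume "W \<in> Pow (sw A B) - {sw A B}"
        then show "sa Kbip_E W = s (card {i. Inl i \<in> W}) (card {j. Inr j \<in> W})" by (intro IH) auto
      qed
      also have "\<dots> = (\<Sum>W\<in>Pow (sw A B). s (card {i. Inl i \<in> W}) (card {j. Inr j \<in> W})) - s (card A) (card B)"
        using fV by (subst sum_diff1) auto
      also have "\<dots> = (\<Sum>p\<in>{..card A} \<times> {..card B}. int (card A choose fst p) * int (card B choose snd p) * s (fst p) (snd p)) - s (card A) (card B)"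
        using sum_sub_sw[OF fin, of s] by simp
      also have "\<dots> = (\<Sum>p\<in>{..card A} \<times> {..card B} - {(card A, card B)}. int (card A choose fst p) * int (card B choose snd p) * s (fst p) (snd p))"
        by (subst sum_diff1) auto
      finally have eq: "(\<Sum>W\<in>{W. W \<subset> sw A B}. sa Kbip_E W) = \<dots>" .
      have "sa Kbip_E (sw A B) = - (\<Sum>W\<in>{W. W \<subset> sw A B}. sa Kbip_E W)"
        using odd_iff ev fV neV by (subst sa.simps) simp
      also have "\<dots> = s (card A) (card B)" unfolding eq using cA ev by (subst (2) s.simps) simp
      finally show ?thesis .
    qed
  qed
qed

lemma map_poly_of_int_add: "map_poly (of_int :: int \<Rightarrow> real) (P + Q) = map_poly of_int P + map_poly of_int Q"
  by (rule poly_eqI) (simp add: coeff_map_poly)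

lemma poly_map_of_int_sum:
  "finite S \<Longrightarrow> poly (map_poly (of_int :: int \<Rightarrow> real) (\<Sum>W\<in>S. monom (c W) (k W))) t = (\<Sum>W\<in>S. of_int (c W) * t^(k W))"
  by (induction S rule: finite_induct) (simp_all add: map_poly_of_int_add map_poly_monom poly_monom)

lemma Kbip_V_sw: "Kbip_V p q = sw {..<p} {..<q}"
  by (simp add: Kbip_V_def sw_def)

lemma P_eq: fixes t :: real shows "poly (map_poly of_int (sa_poly Kbip_E (Kbip_V p q))) t
  = (\<Sum>pr\<in>{..p}\<times>{..q}. of_nat (p choose fst pr) * of_nat (q choose snd pr) * (of_int (s (fst pr) (snd pr)) * (t^(p - fst pr) * t^(q - snd pr))))"
proof -
  let ?V = "sw {..<p} {..<q}"
  have fV: "finite ?V" by (simp add: finite_sw)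
  have "poly (map_poly of_int (sa_poly Kbip_E (Kbip_V p q))) t = (\<Sum>W\<in>Pow ?V. of_int (sa Kbip_E W) * t^(card (?V - W)))"
    unfolding sa_poly_def Kbip_V_sw by (rule poly_map_of_int_sum) (simp add: fV)
  also have "\<dots> = (\<Sum>W\<in>Pow ?V. (\<lambda>i j. of_int (s i j) * (t^(p - i) * t^(q - j))) (card {i. Inl i \<in> W}) (card {j. Inr j \<in> W}))"
  proof (rule sum.cong[OF refl])
    fix W assume "W \<in> Pow ?V"
    define A' B' where "A' = {i. Inl i \<in> W}" and "B' = {j. Inr j \<in> W}"
    have W: "W = sw A' B'" unfolding A'_def B'_def by (rule sw_decomp)
    have sub: "A' \<subseteq> {..<p}" "B' \<subseteq> {..<q}" using \<open>W \<in> Pow ?V\<close> W sw_subset_iff by auto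
    have fin': "finite A'" "finite B'" using sub finite_subset by auto
    have cs: "card A' \<le> p" "card B' \<le> q" using sub card_mono[of "{..<p}"] card_mono[of "{..<q}"] by fastforce+
    have "card (?V - W) = card ?V - card W" using \<open>W \<in> Pow ?V\<close> fV by (simp add: card_Diff_subset finite_subset)
    also have "\<dots> = (p - card A') + (q - card B')" using W card_sw fin' cs by (simp add: card_sw)
    finally have "card (?V - W) = (p - card A') + (q - card B')" .
    then show "of_int (sa Kbip_E W) * t^(card (?V - W)) = (\<lambda>i j. of_int (s i j) * (t^(p - i) * t^(q - j))) (card {i. Inl i \<in> W}) (card {j. Inr j \<in> W})"
      unfolding A'_def[symmetric] B'_def[symmetric] using sa_sw[OF fin'] W by (simp add: power_add)
  qed
  also have "\<dots> = (\<Sum>pr\<in>{..card {..<p}}\<times>{..card {..<q}}. of_nat (card {..<p} choose fst pr) * of_nat (card {..<q} choose snd pr) * (of_int (s (fst pr) (snd pr)) * (t^(p - fst pr) * t^(q - snd pr))))"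
    by (rule sum_sub_sw) auto
  finally show ?thesis by simp
qed

lemma nat_abs_has_sum:
  fixes f :: "nat \<Rightarrow> real"
  assumes "summable (\<lambda>n. norm (f n))" "f sums S"
  shows "(f has_sum S) UNIV" "(\<lambda>n. norm (f n)) summable_on UNIV"
proof -
  show "(f has_sum S) UNIV" by (rule norm_summable_imp_has_sum[OF assms])
  have "((\<lambda>n. norm (f n)) has_sum (suminf (\<lambda>n. norm (f n)))) UNIV"
    by (rule norm_summable_imp_has_sum) (use assms(1) in \<open>auto intro: summable_sums\<close>)
  then show "(\<lambda>n. norm (f n)) summable_on UNIV" by (auto simp: summable_on_def)
qed

lemma exp_has_sum:
  fixes z :: real
  shows "((\<lambda>n. z^n / fact n) has_sum exp z) UNIV" "(\<lambda>n. norm (z^n / fact n)) summable_on UNIV"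
proof -
  have s: "(\<lambda>n. z^n / fact n) sums exp z" using exp_converges[of z] by (simp add: divide_inverse mult.commute)
  have "(\<lambda>n. \<bar>z\<bar>^n / fact n) sums exp \<bar>z\<bar>" using exp_converges[of "\<bar>z\<bar>"] by (simp add: divide_inverse mult.commute)
  then have "summable (\<lambda>n. \<bar>z\<bar>^n / fact n)" by (rule sums_summable)
  moreover have "(\<lambda>n. norm (z^n / fact n)) = (\<lambda>n. \<bar>z\<bar>^n / fact n)" by (simp add: fun_eq_iff power_abs)
  ultimately have sm: "summable (\<lambda>n. norm (z^n / fact n))" by simp
  show "((\<lambda>n. z^n / fact n) has_sum exp z) UNIV" by (rule nat_abs_has_sum(1)[OF sm s])
  show "(\<lambda>n. norm (z^n / fact n)) summable_on UNIV" by (rule nat_abs_has_sum(2)[OF sm s])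
qed

lemma cosh_has_sum:
  fixes z :: real
  shows "((\<lambda>n. if even n then z^n / fact n else 0) has_sum cosh z) UNIV"
        "(\<lambda>n. norm (if even n then z^n / fact n else 0)) summable_on UNIV"
proof -
  have "(\<lambda>n. if even n then z^n / fact n else 0) = (\<lambda>n. if even n then z ^ n /\<^sub>R fact n else 0)"
    by (simp add: fun_eq_iff divide_inverse mult.commute)
  then have s: "(\<lambda>n. if even n then z^n / fact n else 0) sums cosh z" using cosh_converges[of z] by simp
  have "(\<lambda>n. \<bar>z\<bar>^n / fact n) sums exp \<bar>z\<bar>" using exp_converges[of "\<bar>z\<bar>"] by (simp add: divide_inverse mult.commute)
  then have "summable (\<lambda>n. \<bar>z\<bar>^n / fact n)" by (rule sums_summable)
  then have "summable (\<lambda>n. norm (if even n then z^n / fact n else 0))"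
    by (rule summable_comparison_test[rotated]) (auto simp: power_abs)
  then show "((\<lambda>n. if even n then z^n / fact n else 0) has_sum cosh z) UNIV"
        "(\<lambda>n. norm (if even n then z^n / fact n else 0)) summable_on UNIV"
    using s by (rule nat_abs_has_sum)+
qed

lemma delta_has_sum:
  shows "((\<lambda>n::nat. if n = 0 then 1 else 0) has_sum (1::real)) UNIV"
        "(\<lambda>n::nat. norm (if n = 0 then 1 else 0::real)) summable_on UNIV"
proof -
  show "((\<lambda>n::nat. if n = 0 then 1 else 0) has_sum (1::real)) UNIV"
    by (rule has_sum_finite_neutralI[of "{0}"]) auto
  have "((\<lambda>n::nat. norm (if n = 0 then 1 else 0::real)) has_sum 1) UNIV"
    by (rule has_sum_finite_neutralI[of "{0}"]) auto
  then show "(\<lambda>n::nat. norm (if n = 0 then 1 else 0::real)) summable_on UNIV" by (auto simp: summable_on_def)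
qed

lemma prod_abs_summable:
  fixes u :: "'a \<Rightarrow> real" and v :: "'b \<Rightarrow> real"
  assumes "(\<lambda>n. norm (u n)) summable_on UNIV" "(\<lambda>n. norm (v n)) summable_on UNIV"
  shows "(\<lambda>p. norm (u (fst p) * v (snd p))) summable_on UNIV"
proof -
  have "(\<lambda>p. norm (u (fst p) * v (snd p))) summable_on Sigma UNIV (\<lambda>_. UNIV)"
  proof (rule Infinite_Sum.abs_summable_on_Sigma_iff[THEN iffD2], intro conjI ballI)
    fix a
    show "(\<lambda>b. norm (u (fst (a, b)) * v (snd (a, b)))) summable_on UNIV"
      using summable_on_cmult_right[OF assms(2), of "norm (u a)"] by (simp add: abs_mult)
  next
    have key: "\<And>c. infsum (\<lambda>b. c * \<bar>v b\<bar>) UNIV = c * infsum (\<lambda>b. \<bar>v b\<bar>) UNIV"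
      by (rule infsum_cmult_right) (use assms(2) in simp)
    have pw: "(\<lambda>a. norm (infsum (\<lambda>b. norm (u (fst (a, b)) * v (snd (a, b)))) UNIV)) = (\<lambda>a. norm (u a) * infsum (\<lambda>b. norm (v b)) UNIV)"
      by (rule ext) (simp add: abs_mult key infsum_nonneg)
    have "(\<lambda>a. norm (u a) * infsum (\<lambda>b. norm (v b)) UNIV) summable_on UNIV"
      by (rule summable_on_cmult_left[OF assms(1)])
    then show "(\<lambda>a. norm (infsum (\<lambda>b. norm (u (fst (a, b)) * v (snd (a, b)))) UNIV)) summable_on UNIV"
      unfolding pw .
  qed
  then show ?thesis by simp
qed

lemma prod_has_sum:
  fixes u :: "'a \<Rightarrow> real" and v :: "'b \<Rightarrow> real"
  assumes "(u has_sum U) UNIV" "(v has_sum V) UNIV"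
    "(\<lambda>n. norm (u n)) summable_on UNIV" "(\<lambda>n. norm (v n)) summable_on UNIV"
  shows "((\<lambda>p. u (fst p) * v (snd p)) has_sum (U * V)) UNIV"
proof -
  have sm: "(\<lambda>p. u (fst p) * v (snd p)) summable_on Sigma UNIV (\<lambda>_. UNIV)"
    using abs_summable_summable[OF prod_abs_summable[OF assms(3,4)]] by simp
  have "((\<lambda>p. u (fst p) * v (snd p)) has_sum (U * V)) (Sigma UNIV (\<lambda>_. UNIV))"
  proof (rule has_sum_SigmaI[where g="\<lambda>a. u a * V"])
    fix a show "((\<lambda>b. u (fst (a, b)) * v (snd (a, b))) has_sum (u a * V)) UNIV"
      using has_sum_cmult_right[OF assms(2), of "u a"] by simp
  next
    show "((\<lambda>a. u a * V) has_sum (U * V)) UNIV" by (rule has_sum_cmult_left[OF assms(1)])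
  qed (rule sm)
  then show ?thesis by simp
qed

definition tm :: "real \<Rightarrow> real \<Rightarrow> (nat \<times> nat \<Rightarrow> real) \<Rightarrow> nat \<times> nat \<Rightarrow> real" where
  "tm x y f p = f p * x ^ fst p / fact (fst p) * y ^ snd p / fact (snd p)"

definition conv :: "(nat \<times> nat \<Rightarrow> real) \<Rightarrow> (nat \<times> nat \<Rightarrow> real) \<Rightarrow> nat \<times> nat \<Rightarrow> real" where
  "conv f g mn = (\<Sum>pr\<in>{..fst mn}\<times>{..snd mn}. of_nat (fst mn choose fst pr) * of_nat (snd mn choose snd pr) * (f pr * g (fst mn - fst pr, snd mn - snd pr)))"

lemma term_alg:
  fixes x y F G :: real
  assumes "a \<le> m" "b \<le> n"
  shows "(F * x^a / fact a * y^b / fact b) * (G * x^(m-a) / fact (m-a) * y^(n-b) / fact (n-b))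
       = of_nat (m choose a) * of_nat (n choose b) * (F * G) * x^m / fact m * y^n / fact n"
proof -
  have xm: "x^m = x^a * x^(m-a)" using assms by (simp add: power_add[symmetric])
  have yn: "y^n = y^b * y^(n-b)" using assms by (simp add: power_add[symmetric])
  show ?thesis unfolding xm yn binomial_fact[OF assms(1)] binomial_fact[OF assms(2)]
    by (simp add: field_simps)
qed

lemma conv_has_sum:
  assumes f: "(tm x y f has_sum F) UNIV" "(\<lambda>p. norm (tm x y f p)) summable_on UNIV"
  assumes g: "(tm x y g has_sum G) UNIV" "(\<lambda>p. norm (tm x y g p)) summable_on UNIV"
  shows "(tm x y (conv f g) has_sum (F * G)) UNIV"
proof -
  have P: "((\<lambda>q. tm x y f (fst q) * tm x y g (snd q)) has_sum (F * G)) UNIV"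
    by (rule prod_has_sum[OF f(1) g(1) f(2) g(2)])
  define T where "T = Sigma (UNIV :: (nat\<times>nat) set) (\<lambda>mn. {..fst mn}\<times>{..snd mn})"
  define h where "h = (\<lambda>q::(nat\<times>nat)\<times>(nat\<times>nat). tm x y f (snd q) * tm x y g (fst (fst q) - fst (snd q), snd (fst q) - snd (snd q)))"
  have "((\<lambda>q. tm x y f (fst q) * tm x y g (snd q)) has_sum (F * G)) UNIV \<longleftrightarrow> (h has_sum (F * G)) T"
  proof (rule has_sum_reindex_bij_witness[where j="\<lambda>q. ((fst (fst q) + fst (snd q), snd (fst q) + snd (snd q)), fst q)"
        and i="\<lambda>q. (snd q, (fst (fst q) - fst (snd q), snd (fst q) - snd (snd q)))"])
  qed (auto simp: T_def h_def)
  with P have H: "(h has_sum (F * G)) T" by simp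
  have "((\<lambda>mn. \<Sum>pr\<in>{..fst mn}\<times>{..snd mn}. h (mn, pr)) has_sum (F * G)) UNIV"
    by (rule has_sum_Sigma'[OF H[unfolded T_def]]) simp
  moreover have "(\<Sum>pr\<in>{..fst mn}\<times>{..snd mn}. h (mn, pr)) = tm x y (conv f g) mn" for mn
  proof -
    obtain m n where mn: "mn = (m, n)" by (cases mn)
    have "(\<Sum>pr\<in>{..m}\<times>{..n}. h ((m,n), pr)) = (\<Sum>pr\<in>{..m}\<times>{..n}. of_nat (m choose fst pr) * of_nat (n choose snd pr) * (f pr * g (m - fst pr, n - snd pr)) * x^m / fact m * y^n / fact n)"
    proof (rule sum.cong[OF refl])
      fix pr assume "pr \<in> {..m}\<times>{..n}"
      then obtain a b where pr: "pr = (a, b)" "a \<le> m" "b \<le> n" by (cases pr) auto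
      show "h ((m,n), pr) = of_nat (m choose fst pr) * of_nat (n choose snd pr) * (f pr * g (m - fst pr, n - snd pr)) * x^m / fact m * y^n / fact n"
        unfolding pr(1) h_def tm_def fst_conv snd_conv by (rule term_alg[OF pr(2,3)])
    qed
    also have "\<dots> = tm x y (conv f g) (m, n)"
      by (simp add: tm_def conv_def sum_divide_distrib sum_distrib_right)
    finally show ?thesis by (simp add: mn)
  qed
  ultimately show ?thesis by simp
qed

lemma geo_rev: "(\<Sum>i\<le>a. (1/4::real)^(a-i)) \<le> 4/3"
proof -
  have G: "(\<Sum>i\<le>Suc a. (1/4::real)^(Suc a-i)) = (1/4) * (\<Sum>i\<le>a. (1/4::real)^(a-i)) + 1" for a
  proof -
    have "(\<Sum>i\<le>Suc a. (1/4::real)^(Suc a-i)) = (\<Sum>i\<le>a. (1/4::real)^(Suc a-i)) + 1" by simp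
    also have "(\<Sum>i\<le>a. (1/4::real)^(Suc a-i)) = (\<Sum>i\<le>a. (1/4) * (1/4::real)^(a-i))"
      by (rule sum.cong) (auto simp: Suc_diff_le)
    finally show ?thesis by (simp add: sum_distrib_left)
  qed
  show ?thesis
  proof (induction a)
    case 0 then show ?case by simp
  next
    case (Suc a) then show ?case unfolding G by simp
  qed
qed

lemma geo_rect: "(\<Sum>p\<in>{..a}\<times>{..b} - {(a,b)}. (1/4::real)^(a - fst p) * (1/4)^(b - snd p)) \<le> 1"
proof -
  have "(\<Sum>p\<in>{..a}\<times>{..b} - {(a,b)}. (1/4::real)^(a - fst p) * (1/4)^(b - snd p))
      = (\<Sum>p\<in>{..a}\<times>{..b}. (1/4::real)^(a - fst p) * (1/4)^(b - snd p)) - 1"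
    by (subst sum_diff1) auto
  also have "(\<Sum>p\<in>{..a}\<times>{..b}. (1/4::real)^(a - fst p) * (1/4)^(b - snd p))
      = (\<Sum>i\<le>a. (1/4::real)^(a-i)) * (\<Sum>j\<le>b. (1/4::real)^(b-j))"
    by (simp add: sum.cartesian_product' sum_product)
  also have "\<dots> \<le> (4/3) * (4/3)"
    using geo_rev[of a] geo_rev[of b] by (intro mult_mono) (auto intro: sum_nonneg)
  finally show ?thesis by simp
qed

lemma choose_fact_le: "i \<le> a \<Longrightarrow> real (a choose i) * fact i \<le> fact a"
proof -
  assume "i \<le> a"
  then have "real (a choose i) * fact i * fact (a - i) = fact a"
  proof -
    have "fact i * fact (a - i) * (a choose i) = fact a" by (rule binomial_fact_lemma[OF \<open>i \<le> a\<close>])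
    then have "real (fact i * fact (a - i) * (a choose i)) = real (fact a)" by (rule arg_cong)
    then show ?thesis by (simp add: of_nat_mult mult_ac)
  qed
  moreover have "(1::real) \<le> fact (a - i)" by simp
  moreover have "0 \<le> real (a choose i) * fact i" by simp
  ultimately have "real (a choose i) * fact i * 1 \<le> real (a choose i) * fact i * fact (a - i)"
    by (intro mult_left_mono) auto
  with \<open>real (a choose i) * fact i * fact (a - i) = fact a\<close> show ?thesis by simp
qed

lemma pow4_split: "i \<le> a \<Longrightarrow> (4::real)^i = 4^a * (1/4)^(a-i)"
proof -
  assume "i \<le> a"
  then have "(4::real)^a = 4^i * 4^(a-i)" by (simp add: power_add[symmetric])
  moreover have "(4::real)^(a-i) * (1/4)^(a-i) = 1" by (simp add: power_mult_distrib[symmetric])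
  ultimately show ?thesis by (metis mult.assoc mult_1_right)
qed

lemma term_bound:
  assumes "i \<le> a" "j \<le> b"
  shows "real (a choose i) * real (b choose j) * (4^(i+j) * fact i * fact j)
     \<le> (4^(a+b) * fact a * fact b) * ((1/4::real)^(a - i) * (1/4)^(b - j))"
proof -
  have "real (a choose i) * real (b choose j) * (4^(i+j) * fact i * fact j)
      = (real (a choose i) * fact i) * (real (b choose j) * fact j) * (4^i * 4^j)"
    by (simp add: power_add)
  also have "\<dots> \<le> fact a * fact b * (4^i * 4^j)"
    using choose_fact_le[OF assms(1)] choose_fact_le[OF assms(2)]
    by (intro mult_right_mono mult_mono) auto
  also have "\<dots> = (4^(a+b) * fact a * fact b) * ((1/4::real)^(a - i) * (1/4)^(b - j))"
    unfolding pow4_split[OF assms(1)] pow4_split[OF assms(2)] by (simp add: power_add)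
  finally show ?thesis .
qed

lemma s_bound: "\<bar>real_of_int (s a b)\<bar> \<le> 4^(a+b) * fact a * fact b"
proof (induction "a+b" arbitrary: a b rule: less_induct)
  case less
  show ?case
  proof (cases "a = 0 \<and> b = 0")
    case True then show ?thesis by (simp add: s.simps)
  next
    case nz: False
    show ?thesis
    proof (cases "a = 0 \<or> b = 0 \<or> odd (a+b)")
      case True then show ?thesis using nz by (subst s.simps) simp
    next
      case False
      let ?S = "{..a}\<times>{..b} - {(a,b)}"
      have "real_of_int (s a b) = - (\<Sum>p\<in>?S. real (a choose fst p) * real (b choose snd p) * real_of_int (s (fst p) (snd p)))"
        using False nz by (subst s.simps) simp
      then have "\<bar>real_of_int (s a b)\<bar> = \<bar>\<Sum>p\<in>?S. real (a choose fst p) * real (b choose snd p) * real_of_int (s (fst p) (snd p))\<bar>"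
        by simp
      also have "\<dots> \<le> (\<Sum>p\<in>?S. \<bar>real (a choose fst p) * real (b choose snd p) * real_of_int (s (fst p) (snd p))\<bar>)"
        by (rule sum_abs)
      also have "\<dots> \<le> (\<Sum>p\<in>?S. (4^(a+b) * fact a * fact b) * ((1/4::real)^(a - fst p) * (1/4)^(b - snd p)))"
      proof (rule sum_mono)
        fix p assume p: "p \<in> ?S"
        then have le: "fst p \<le> a" "snd p \<le> b" by auto
        have lt: "fst p + snd p < a + b" using p by (cases p) (auto simp: tm_helper)
        have "\<bar>real (a choose fst p) * real (b choose snd p) * real_of_int (s (fst p) (snd p))\<bar>
            = real (a choose fst p) * real (b choose snd p) * \<bar>real_of_int (s (fst p) (snd p))\<bar>"
          by (simp add: abs_mult)
        also have "\<dots> \<le> real (a choose fst p) * real (b choose snd p) * (4^(fst p + snd p) * fact (fst p) * fact (snd p))"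
          by (intro mult_left_mono less.hyps[OF lt]) auto
        also have "\<dots> \<le> (4^(a+b) * fact a * fact b) * ((1/4::real)^(a - fst p) * (1/4)^(b - snd p))"
          by (rule term_bound[OF le])
        finally show "\<bar>real (a choose fst p) * real (b choose snd p) * real_of_int (s (fst p) (snd p))\<bar>
            \<le> (4^(a+b) * fact a * fact b) * ((1/4::real)^(a - fst p) * (1/4)^(b - snd p))" .
      qed
      also have "\<dots> = (4^(a+b) * fact a * fact b) * (\<Sum>p\<in>?S. (1/4::real)^(a - fst p) * (1/4)^(b - snd p))"
        by (simp add: sum_distrib_left)
      also have "\<dots> \<le> (4^(a+b) * fact a * fact b) * 1"
        by (intro mult_left_mono geo_rect) auto
      finally show ?thesis by simp
    qed
  qed
qed

lemma tm_one: "tm x y f p = f p * tm x y (\<lambda>_. 1) p"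
  by (simp add: tm_def)

lemma pow_family:
  shows "(tm x y (\<lambda>p. a^fst p * b^snd p) has_sum (exp (a*x) * exp (b*y))) UNIV"
        "(\<lambda>p. norm (tm x y (\<lambda>p. a^fst p * b^snd p) p)) summable_on UNIV"
proof -
  have eq: "tm x y (\<lambda>p. a^fst p * b^snd p) p = (a*x)^fst p / fact (fst p) * ((b*y)^snd p / fact (snd p))" for p
    by (simp add: tm_def power_mult_distrib)
  show "(tm x y (\<lambda>p. a^fst p * b^snd p) has_sum (exp (a*x) * exp (b*y))) UNIV"
    unfolding eq by (rule prod_has_sum[OF exp_has_sum(1) exp_has_sum(1) exp_has_sum(2) exp_has_sum(2)])
  show "(\<lambda>p. norm (tm x y (\<lambda>p. a^fst p * b^snd p) p)) summable_on UNIV"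
    unfolding eq by (rule prod_abs_summable[OF exp_has_sum(2) exp_has_sum(2)])
qed

definition kap :: "nat \<times> nat \<Rightarrow> real" where
  "kap p = (if even (fst p + snd p) then 1 else 0)"

lemma kappa_family:
  shows "(tm x y kap has_sum cosh (x + y)) UNIV" "(\<lambda>p. norm (tm x y kap p)) summable_on UNIV"
proof -
  have m1: "(-1::real)^i * (-1)^j = (if even (i+j) then 1 else -1)" for i j :: nat
    by (simp add: power_add[symmetric])
  have eq: "tm x y kap p = (tm x y (\<lambda>p. 1^fst p * 1^snd p) p + tm x y (\<lambda>p. (-1)^fst p * (-1)^snd p) p) * (1/2)" for p
    unfolding tm_def kap_def m1 by simp
  have "((\<lambda>p. (tm x y (\<lambda>p. 1^fst p * 1^snd p) p + tm x y (\<lambda>p. (-1)^fst p * (-1)^snd p) p) * (1/2)) has_sum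
        ((exp (1*x) * exp (1*y) + exp ((-1)*x) * exp ((-1)*y)) * (1/2))) UNIV"
    by (intro has_sum_cmult_left has_sum_add pow_family(1))
  moreover have "(exp (1*x) * exp (1*y) + exp ((-1)*x) * exp ((-1)*y)) * (1/2) = cosh (x + y)"
    by (simp add: cosh_field_def exp_add[symmetric])
  ultimately show "(tm x y kap has_sum cosh (x + y)) UNIV" unfolding eq by simp
  show "(\<lambda>p. norm (tm x y kap p)) summable_on UNIV"
  proof (rule Infinite_Sum.summable_on_comparison_test)
    show "(\<lambda>p. norm (tm x y (\<lambda>p. 1^fst p * 1^snd p) p)) summable_on UNIV" by (rule pow_family(2))
    fix p
    have "norm (tm x y kap p) = \<bar>kap p\<bar> * norm (tm x y (\<lambda>_. 1) p)"
      by (subst tm_one) (simp add: abs_mult)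
    also have "\<dots> \<le> norm (tm x y (\<lambda>_. 1) p)"
      by (intro mult_left_le_one_le) (auto simp: kap_def)
    finally show "norm (tm x y kap p) \<le> norm (tm x y (\<lambda>p. 1^fst p * 1^snd p) p)" by simp
  qed simp
qed

definition hh :: "nat \<times> nat \<Rightarrow> real" where
  "hh p = (if snd p = 0 \<and> even (fst p) then 1 else 0) + (if fst p = 0 \<and> even (snd p) then 1 else 0)
        - (if fst p = 0 \<and> snd p = 0 then 1 else 0)"

lemma hh_family: "(tm x y hh has_sum (cosh x + cosh y - 1)) UNIV"
proof -
  define u1 where "u1 = (\<lambda>n. if even n then x^n / fact n else (0::real))"
  define u2 where "u2 = (\<lambda>n. if even n then y^n / fact n else (0::real))"
  define d where "d = (\<lambda>n::nat. if n = 0 then 1 else (0::real))"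
  have eq: "tm x y hh p = u1 (fst p) * d (snd p) + (d (fst p) * u2 (snd p) + - (d (fst p) * d (snd p)))" for p
    unfolding tm_def hh_def u1_def u2_def d_def by (cases p) auto
  have h1: "((\<lambda>p. u1 (fst p) * d (snd p)) has_sum (cosh x * 1)) UNIV"
    unfolding u1_def d_def by (rule prod_has_sum[OF cosh_has_sum(1) delta_has_sum(1) cosh_has_sum(2) delta_has_sum(2)])
  have h2: "((\<lambda>p. d (fst p) * u2 (snd p)) has_sum (1 * cosh y)) UNIV"
    unfolding u2_def d_def by (rule prod_has_sum[OF delta_has_sum(1) cosh_has_sum(1) delta_has_sum(2) cosh_has_sum(2)])
  have h3: "((\<lambda>p. d (fst p) * d (snd p)) has_sum (1 * 1)) UNIV"
    unfolding d_def by (rule prod_has_sum[OF delta_has_sum(1) delta_has_sum(1) delta_has_sum(2) delta_has_sum(2)])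
  have h3': "((\<lambda>p. - (d (fst p) * d (snd p))) has_sum (- (1 * 1))) UNIV"
    using h3 by (simp add: has_sum_uminus)
  have "((\<lambda>p. u1 (fst p) * d (snd p) + (d (fst p) * u2 (snd p) + - (d (fst p) * d (snd p)))) has_sum
      (cosh x * 1 + (1 * cosh y + - (1 * 1)))) UNIV"
    by (intro has_sum_add h1 h2 h3')
  then show ?thesis unfolding eq by (simp add: add_diff_eq)
qed

definition sr :: "nat \<times> nat \<Rightarrow> real" where
  "sr p = real_of_int (s (fst p) (snd p))"

lemma s_zero: "(i, j) \<noteq> (0, 0) \<Longrightarrow> i = 0 \<or> j = 0 \<or> odd (i + j) \<Longrightarrow> s i j = 0"
  by (subst s.simps) auto

lemma s00: "s 0 0 = 1" by (subst s.simps) simp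

lemma conv_kap: "conv sr kap mn = hh mn"
proof -
  obtain m n where mn: "mn = (m, n)" by (cases mn)
  let ?f = "\<lambda>pr. of_nat (m choose fst pr) * of_nat (n choose snd pr) * (sr pr * kap (m - fst pr, n - snd pr))"
  have conv_eq: "conv sr kap (m, n) = (\<Sum>pr\<in>{..m}\<times>{..n}. ?f pr)" by (simp add: conv_def)
  have "conv sr kap (m, n) = hh (m, n)"
  proof (cases "m = 0 \<or> n = 0")
    case True
    have z: "?f pr = 0" if "pr \<in> {..m}\<times>{..n} - {(0,0)}" for pr
    proof -
      obtain i j where pr: "pr = (i, j)" by (cases pr)
      have "s i j = 0" using that True pr by (intro s_zero) auto
      then show ?thesis by (simp add: pr sr_def)
    qed
    have "conv sr kap (m, n) = ?f (0,0) + (\<Sum>pr\<in>{..m}\<times>{..n} - {(0,0)}. ?f pr)"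
      unfolding conv_eq by (subst sum.remove[of _ "(0,0)"]) auto
    also have "(\<Sum>pr\<in>{..m}\<times>{..n} - {(0,0)}. ?f pr) = 0"
      by (rule sum.neutral) (use z in blast)
    also have "?f (0,0) + 0 = hh (m, n)" using True by (auto simp: sr_def s00 kap_def hh_def)
    finally show ?thesis .
  next
    case False
    then have pos: "m \<noteq> 0" "n \<noteq> 0" by auto
    have par: "even (m - i + (n - j)) \<longleftrightarrow> (even (m + n) \<longleftrightarrow> even (i + j))" if "i \<le> m" "j \<le> n" for i j
      using that by presburger
    have sz: "odd (i + j) \<Longrightarrow> s i j = 0" for i j by (intro s_zero) auto
    show ?thesis
    proof (cases "even (m + n)")
      case True
      have "?f pr = of_nat (m choose fst pr) * of_nat (n choose snd pr) * sr pr" if "pr \<in> {..m}\<times>{..n}" for pr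
        using that par[of "fst pr" "snd pr"] sz[of "fst pr" "snd pr"] True
        by (cases pr) (auto simp: kap_def sr_def)
      then have "conv sr kap (m, n) = (\<Sum>pr\<in>{..m}\<times>{..n}. of_nat (m choose fst pr) * of_nat (n choose snd pr) * sr pr)"
        unfolding conv_eq by (rule sum.cong[OF refl])
      also have "\<dots> = sr (m, n) + (\<Sum>pr\<in>{..m}\<times>{..n} - {(m,n)}. of_nat (m choose fst pr) * of_nat (n choose snd pr) * sr pr)"
        by (subst sum.remove[of _ "(m,n)"]) auto
      also have "(\<Sum>pr\<in>{..m}\<times>{..n} - {(m,n)}. of_nat (m choose fst pr) * of_nat (n choose snd pr) * sr pr)
          = real_of_int (\<Sum>pr\<in>{..m}\<times>{..n} - {(m,n)}. int (m choose fst pr) * int (n choose snd pr) * s (fst pr) (snd pr))"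
        by (simp add: sr_def)
      also have "(\<Sum>pr\<in>{..m}\<times>{..n} - {(m,n)}. int (m choose fst pr) * int (n choose snd pr) * s (fst pr) (snd pr)) = - s m n"
        using pos True by (subst (2) s.simps) simp
      finally show ?thesis using pos by (simp add: sr_def[of "(m,n)"] hh_def)
    next
      case False
      have z: "?f pr = 0" if "pr \<in> {..m}\<times>{..n}" for pr
        using that par[of "fst pr" "snd pr"] sz[of "fst pr" "snd pr"] False
        by (cases pr) (auto simp: kap_def sr_def)
      have "conv sr kap (m, n) = 0" unfolding conv_eq by (rule sum.neutral) (use z in blast)
      then show ?thesis using pos by (simp add: hh_def)
    qed
  qed
  then show ?thesis by (simp add: mn)
qed

lemma P_conv:
  fixes t :: real
  shows "poly (map_poly of_int (sa_poly Kbip_E (Kbip_V p q))) t = conv sr (\<lambda>pr. t^fst pr * t^snd pr) (p, q)"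
  unfolding P_eq conv_def by (simp add: sr_def)

lemma sr_summable:
  fixes x y :: real
  assumes "\<bar>x\<bar> < 1/8" "\<bar>y\<bar> < 1/8"
  shows "(\<lambda>p. norm (tm x y sr p)) summable_on UNIV"
proof (rule Infinite_Sum.summable_on_comparison_test)
  have g: "(\<lambda>n. norm ((1/2::real)^n)) summable_on UNIV"
    by (rule nat_abs_has_sum(2)[OF _ geometric_sums]) (auto intro: summable_geometric)
  show "(\<lambda>p. norm ((1/2::real)^fst p * (1/2)^snd p)) summable_on UNIV"
    by (rule prod_abs_summable[OF g g])
  fix p :: "nat \<times> nat"
  obtain i j where p: "p = (i, j)" by (cases p)
  have "norm (tm x y sr p) = \<bar>real_of_int (s i j)\<bar> * (\<bar>x\<bar>^i / fact i) * (\<bar>y\<bar>^j / fact j)"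
    by (simp add: p tm_def sr_def abs_mult power_abs)
  also have "\<dots> \<le> (4^(i+j) * fact i * fact j) * (\<bar>x\<bar>^i / fact i) * (\<bar>y\<bar>^j / fact j)"
    by (intro mult_right_mono s_bound) auto
  also have "\<dots> = (4 * \<bar>x\<bar>)^i * (4 * \<bar>y\<bar>)^j"
    by (simp add: power_add power_mult_distrib)
  also have "\<dots> \<le> (1/2)^i * (1/2)^j"
    using assms by (intro mult_mono power_mono) auto
  finally show "norm (tm x y sr p) \<le> norm ((1/2::real)^fst p * (1/2)^snd p)" by (simp add: p)
qed simp

theorem mainTheorem8:
  fixes t :: real
  shows "\<exists>\<epsilon>>0. \<forall>x y :: real. \<bar>x\<bar> < \<epsilon> \<and> \<bar>y\<bar> < \<epsilon> \<longrightarrow>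
    ((\<lambda>(p, q). poly (map_poly of_int (sa_poly Kbip_E (Kbip_V p q))) t * x ^ p / fact p * y ^ q / fact q)
      has_sum (exp (t * (x + y)) * (cosh x + cosh y - 1) / cosh (x + y))) UNIV"
proof (intro exI[of _ "1/8"] conjI allI impI)
  fix x y :: real
  assume xy: "\<bar>x\<bar> < 1/8 \<and> \<bar>y\<bar> < 1/8"
  have ns: "(\<lambda>p. norm (tm x y sr p)) summable_on UNIV" using xy by (intro sr_summable) auto
  then have "tm x y sr summable_on UNIV" by (rule abs_summable_summable)
  then obtain T where T: "(tm x y sr has_sum T) UNIV" by (auto simp: summable_on_def)
  have "(tm x y (conv sr kap) has_sum (T * cosh (x + y))) UNIV"
    by (rule conv_has_sum[OF T ns kappa_family(1) kappa_family(2)])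
  moreover have "tm x y (conv sr kap) = tm x y hh" by (rule ext) (simp add: tm_def conv_kap)
  ultimately have "(tm x y hh has_sum (T * cosh (x + y))) UNIV" by simp
  then have "T * cosh (x + y) = cosh x + cosh y - 1" using hh_family has_sum_unique by blast
  moreover have "cosh (x + y) > 0" by (rule cosh_real_pos)
  ultimately have Tval: "T = (cosh x + cosh y - 1) / cosh (x + y)" by (simp add: field_simps)
  have "(tm x y (conv sr (\<lambda>pr. t^fst pr * t^snd pr)) has_sum (T * (exp (t*x) * exp (t*y)))) UNIV"
    by (rule conv_has_sum[OF T ns pow_family(1) pow_family(2)])
  moreover have "tm x y (conv sr (\<lambda>pr. t^fst pr * t^snd pr)) =
      (\<lambda>(p, q). poly (map_poly of_int (sa_poly Kbip_E (Kbip_V p q))) t * x ^ p / fact p * y ^ q / fact q)"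
    by (rule ext) (simp add: tm_def P_conv split: prod.splits)
  moreover have "T * (exp (t*x) * exp (t*y)) = exp (t * (x + y)) * (cosh x + cosh y - 1) / cosh (x + y)"
    by (simp add: Tval distrib_left exp_add)
  ultimately show "((\<lambda>(p, q). poly (map_poly of_int (sa_poly Kbip_E (Kbip_V p q))) t * x ^ p / fact p * y ^ q / fact q)
      has_sum (exp (t * (x + y)) * (cosh x + cosh y - 1) / cosh (x + y))) UNIV" by simp
qed simp

end
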